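(* Let $l \ge 3$ be an integer and $d = 4l$. For $T\subseteq[d]$ write $e_T\in\{0,1\}^d$ for the indicator vector of $T$. Let the demonstration set $D$ consist of all vectors $e_{T_1\cup T_2}$ with $T_1\subseteq[2l]$, $|T_1| = l-1$, and $T_2\subseteq\{2l+1,\dots,4l\}$, $|T_2| = 1$ (the entire support of the demonstration distribution). Let the query $e_q = e_T$ with $T$ drawn uniformly among subsets of $[2l]$ of size $l$. Let $\theta\in\mathbb R^d$ have i.i.d. entries uniform on $[0,1]$, independent of $e_q$, and let $K=2$. Let $L$ be the expected prediction loss $\mathbb E\big[\langle \theta - E^\dagger E\theta, e_q\rangle^2\big]$ when the two demonstrations (rows of $E$) are selected by TopK, and $L'$ the same quantity when they are selected by TopK-Div with hyperparameter $\alpha$, where the expectation is over $\theta$, $e_q$, and the random tie-breaking in the selection. Then $L > L'$ whenever $1 - 1/l \le \alpha < 1$.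
   Context: Cosine similarity: $\mathrm{Sim}(u,v) = \langle u,v\rangle/(\|u\|\|v\|)$. For a vector $e$ and a nonempty finite set $S$ of vectors, $\mathrm{Div}(e,S) = 1 - \frac{1}{|S|}\sum_{s\in S}\mathrm{Sim}(e,s)$, and $\mathrm{Div}(e,\emptyset)=0$. TopK selection: choose the $K$ elements of $D$ with the largest $\mathrm{Sim}(\cdot,e_q)$, ties broken uniformly at random. TopK-Div selection with parameter $\alpha$: start with $S=\emptyset$ and, while $|S|<K$, add an element $e\in D\setminus S$ maximizing $\alpha\,\mathrm{Sim}(e,e_q) + (1-\alpha)\mathrm{Div}(e,S)$ (ties broken uniformly at random); in particular the first selected element maximizes similarity to $e_q$. Given the selected demonstrations $e_{j_1},\dots,e_{j_K}$, $E = [e_{j_1},\dots,e_{j_K}]^\top\in\mathbb R^{K\times d}$, $E^\dagger$ is its Moore–Penrose pseudoinverse, the model's prediction on query $e_q$ is $\langle e_q, E^\dagger E\theta\rangle$ (the min-norm interpolating linear regression solution), the true label is $\langle\theta,e_q\rangle$, and the prediction loss is $\langle \theta - E^\dagger E\theta, e_q\rangle^2$. *)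

theory Defs
  imports "HOL-Probability.Probability" "Jordan_Normal_Form.Matrix"
begin

text \<open>Vectors in R^d are Jordan_Normal_Form vectors of dimension d (indices 0..d-1,
  corresponding to coordinates 1..d).\<close>

definition vnorm :: "real vec \<Rightarrow> real" where
  "vnorm u = sqrt (scalar_prod u u)"

definition Sim :: "real vec \<Rightarrow> real vec \<Rightarrow> real" where
  "Sim u v = scalar_prod u v / (vnorm u * vnorm v)"

definition Div :: "real vec \<Rightarrow> real vec set \<Rightarrow> real" where
  "Div e S = (if S = {} then 0 else 1 - (\<Sum>s\<in>S. Sim e s) / real (card S))"

definition indvec :: "nat \<Rightarrow> nat set \<Rightarrow> real vec" where
  "indvec d T = vec d (\<lambda>i. if i + 1 \<in> T then 1 else 0)"

definition pinv :: "real mat \<Rightarrow> real mat" where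
  "pinv A = (THE X. X \<in> carrier_mat (dim_col A) (dim_row A) \<and>
      A * X * A = A \<and> X * A * X = X \<and>
      transpose_mat (A * X) = A * X \<and> transpose_mat (X * A) = X * A)"

definition pred_loss :: "nat \<Rightarrow> real vec list \<Rightarrow> real vec \<Rightarrow> real vec \<Rightarrow> real" where
  "pred_loss d xs \<theta> q =
     (let E = mat_of_rows d xs in (scalar_prod (\<theta> - (pinv E * E) *\<^sub>v \<theta>) q)\<^sup>2)"

text \<open>TopK selection: uniformly random among all (ordered) choices of K distinct
  elements of D such that every chosen element is at least as similar to q as
  every unchosen one (i.e. top-K with uniformly random tie-breaking).\<close>
definition topk_sel :: "real vec set \<Rightarrow> nat \<Rightarrow> real vec \<Rightarrow> real vec list pmf" where
  "topk_sel D K q = pmf_of_set {xs. distinct xs \<and> length xs = K \<and> set xs \<subseteq> D \<and>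
       (\<forall>x\<in>set xs. \<forall>y\<in>D - set xs. Sim y q \<le> Sim x q)}"

definition div_score :: "real \<Rightarrow> real vec \<Rightarrow> real vec set \<Rightarrow> real vec \<Rightarrow> real" where
  "div_score \<alpha> q S e = \<alpha> * Sim e q + (1 - \<alpha>) * Div e S"

fun topkdiv_sel :: "real \<Rightarrow> real vec set \<Rightarrow> nat \<Rightarrow> real vec \<Rightarrow> real vec list pmf" where
  "topkdiv_sel \<alpha> D 0 q = return_pmf []"
| "topkdiv_sel \<alpha> D (Suc k) q =
     bind_pmf (topkdiv_sel \<alpha> D k q) (\<lambda>xs.
       map_pmf (\<lambda>e. xs @ [e])
         (pmf_of_set {e \<in> D - set xs. \<forall>e'\<in>D - set xs.
                div_score \<alpha> q (set xs) e' \<le> div_score \<alpha> q (set xs) e}))"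

definition theta_measure :: "nat \<Rightarrow> (nat \<Rightarrow> real) measure" where
  "theta_measure d = PiM {..<d} (\<lambda>_. uniform_measure lborel {0..1::real})"

definition expected_loss ::
  "nat \<Rightarrow> real vec pmf \<Rightarrow> (real vec \<Rightarrow> real vec list pmf) \<Rightarrow> real" where
  "expected_loss d Q sel =
     measure_pmf.expectation Q (\<lambda>q. measure_pmf.expectation (sel q) (\<lambda>xs.
        integral\<^sup>L (theta_measure d) (\<lambda>\<theta>. pred_loss d xs (vec d \<theta>) q)))"

definition demo_set :: "nat \<Rightarrow> real vec set" where
  "demo_set l = {indvec (4 * l) (T1 \<union> T2) | T1 T2.
       T1 \<subseteq> {1..2 * l} \<and> card T1 = l - 1 \<and> T2 \<subseteq> {2 * l + 1..4 * l} \<and> card T2 = 1}"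

definition query_dist :: "nat \<Rightarrow> real vec pmf" where
  "query_dist l = map_pmf (indvec (4 * l)) (pmf_of_set {T. T \<subseteq> {1..2 * l} \<and> card T = l})"

end

theory Submission
  imports Defs
begin

lemma penrose_unique:
  fixes A X Y :: "real mat"
  assumes A: "A \<in> carrier_mat m n" and X: "X \<in> carrier_mat n m" and Y: "Y \<in> carrier_mat n m"
  and X1: "A * X * A = A" and X2: "X * A * X = X" and X3: "transpose_mat (A * X) = A * X"
  and X4: "transpose_mat (X * A) = X * A"
  and Y1: "A * Y * A = A" and Y2: "Y * A * Y = Y" and Y3: "transpose_mat (A * Y) = A * Y"
  and Y4: "transpose_mat (Y * A) = Y * A"
  shows "X = Y"
proof -
  have XA: "X * A \<in> carrier_mat n n" and YA: "Y * A \<in> carrier_mat n n"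
    and AX: "A * X \<in> carrier_mat m m" and AY: "A * Y \<in> carrier_mat m m"
    using A X Y by auto
  have "X * A = X * (A * Y * A)" using Y1 by simp
  also have "\<dots> = (X * A) * (Y * A)" using A X Y by (simp add: assoc_mult_mat[of _ n m _ n _ n])
  finally have e1: "X * A = (X * A) * (Y * A)" .
  have "X * A = transpose_mat ((X * A) * (Y * A))" using e1 X4 by metis
  also have "\<dots> = transpose_mat (Y * A) * transpose_mat (X * A)"
    using XA YA by (rule transpose_mult)
  also have "\<dots> = (Y * A) * (X * A)" using X4 Y4 by simp
  also have "\<dots> = Y * (A * X * A)" using A X Y by (simp add: assoc_mult_mat[of _ n m _ n _ n])
  also have "\<dots> = Y * A" using X1 by simp
  finally have XAYA: "X * A = Y * A" .
  have "A * X = (A * Y * A) * X" using Y1 by simp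
  also have "\<dots> = (A * Y) * (A * X)" by (subst assoc_mult_mat[of "A*Y" m m A n X m]) (use A X Y in auto)
  finally have e2: "A * X = (A * Y) * (A * X)" .
  have "A * X = transpose_mat ((A * Y) * (A * X))" using e2 X3 by metis
  also have "\<dots> = transpose_mat (A * X) * transpose_mat (A * Y)"
    using AY AX by (rule transpose_mult)
  also have "\<dots> = (A * X) * (A * Y)" using X3 Y3 by simp
  also have "\<dots> = (A * X * A) * Y" by (subst assoc_mult_mat[of "A*X" m m A n Y m]) (use A X Y in auto)
  also have "\<dots> = A * Y" using X1 by simp
  finally have AXAY: "A * X = A * Y" .
  have "X = X * A * X" using X2 by simp
  also have "\<dots> = X * (A * Y)" using A X Y AXAY by (simp add: assoc_mult_mat[of _ n m _ n _ m])
  also have "\<dots> = (X * A) * Y" using A X Y by (simp add: assoc_mult_mat[of _ n m _ n _ m])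
  also have "\<dots> = (Y * A) * Y" using XAYA by simp
  also have "\<dots> = Y" using Y2 by simp
  finally show ?thesis .
qed

lemma pinv_eqI:
  fixes A X :: "real mat"
  assumes X: "X \<in> carrier_mat (dim_col A) (dim_row A)"
  and X1: "A * X * A = A" and X2: "X * A * X = X" and X3: "transpose_mat (A * X) = A * X"
  and X4: "transpose_mat (X * A) = X * A"
  shows "pinv A = X"
  unfolding pinv_def
proof (rule the_equality)
  show "X \<in> carrier_mat (dim_col A) (dim_row A) \<and> A * X * A = A \<and> X * A * X = X \<and>
    transpose_mat (A * X) = A * X \<and> transpose_mat (X * A) = X * A" using assms by auto
next
  fix Y assume "Y \<in> carrier_mat (dim_col A) (dim_row A) \<and> A * Y * A = A \<and> Y * A * Y = Y \<and>
    transpose_mat (A * Y) = A * Y \<and> transpose_mat (Y * A) = Y * A"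
  then show "Y = X" using penrose_unique[of A "dim_row A" "dim_col A" Y X] assms by auto
qed

definition PX :: "nat \<Rightarrow> real vec \<Rightarrow> real vec \<Rightarrow> real \<Rightarrow> real \<Rightarrow> real mat" where
  "PX d a b p r = mat d 2 (\<lambda>(i,k). if k = 0 then p * a $ i + r * b $ i else r * a $ i + p * b $ i)"

lemma sp_lin:
  fixes a b v :: "real vec" and x y :: real
  assumes "a \<in> carrier_vec d" "b \<in> carrier_vec d" "v \<in> carrier_vec d"
  shows "scalar_prod v (vec d (\<lambda>i. x * a $ i + y * b $ i)) = x * (scalar_prod v a) + y * (scalar_prod v b)"
proof -
  have "scalar_prod v (vec d (\<lambda>i. x * a $ i + y * b $ i)) = (\<Sum>i\<in>{0..<d}. v $ i * (x * a $ i + y * b $ i))"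
    unfolding scalar_prod_def by simp
  also have "\<dots> = (\<Sum>i\<in>{0..<d}. x * (v $ i * a $ i) + y * (v $ i * b $ i))"
    by (rule sum.cong) (simp_all add: algebra_simps)
  also have "\<dots> = x * (scalar_prod v a) + y * (scalar_prod v b)"
    using assms unfolding scalar_prod_def by (simp add: sum.distrib sum_distrib_left)
  finally show ?thesis .
qed

lemma two_set: "{0..<2::nat} = {0, Suc 0}" by auto

lemma PX_carrier: "PX d a b p r \<in> carrier_mat d 2"
  unfolding PX_def by simp

lemma PX_dims[simp]: "dim_row (PX d a b p r) = d" "dim_col (PX d a b p r) = 2"
  unfolding PX_def by simp_all

lemma col_PX0: "col (PX d a b p r) 0 = vec d (\<lambda>i. p * a $ i + r * b $ i)"
  unfolding PX_def by (intro eq_vecI) auto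

lemma col_PX1: "col (PX d a b p r) (Suc 0) = vec d (\<lambda>i. r * a $ i + p * b $ i)"
  unfolding PX_def by (intro eq_vecI) auto

lemma E_PX:
  assumes a: "a \<in> carrier_vec d" and b: "b \<in> carrier_vec d"
  and h1: "p * (scalar_prod a a) + r * (scalar_prod a b) = 1" and h2: "r * (scalar_prod a a) + p * (scalar_prod a b) = 0"
  and bb: "scalar_prod b b = scalar_prod a a"
  shows "mat_of_rows d [a, b] * PX d a b p r = 1\<^sub>m 2"
proof (rule eq_matI)
  have ba: "scalar_prod b a = scalar_prod a b" using a b by (simp add: comm_scalar_prod[of _ d])
  fix i j assume i: "i < dim_row (1\<^sub>m 2 :: real mat)" and j: "j < dim_col (1\<^sub>m 2 :: real mat)"
  then have i2: "i = 0 \<or> i = 1" and j2: "j = 0 \<or> j = 1" by auto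
  have rowE: "row (mat_of_rows d [a, b]) i = [a, b] ! i" using i2 a b by auto
  show "(mat_of_rows d [a, b] * PX d a b p r) $$ (i, j) = 1\<^sub>m 2 $$ (i, j)"
    using i2 j2 i j rowE a b h1 h2 bb ba
    by (auto simp: col_PX0 col_PX1 sp_lin PX_carrier algebra_simps)
qed (auto simp: PX_carrier)

lemma PX_E_entry:
  assumes a: "a \<in> carrier_vec d" and b: "b \<in> carrier_vec d" and i: "i < d" and j: "j < d"
  shows "(PX d a b p r * mat_of_rows d [a, b]) $$ (i, j) =
     (p * a $ i + r * b $ i) * a $ j + (r * a $ i + p * b $ i) * b $ j"
proof -
  have "(PX d a b p r * mat_of_rows d [a, b]) $$ (i, j) = PX d a b p r $$ (i,0) * mat_of_rows d [a, b] $$ (0,j) + PX d a b p r $$ (i,1) * mat_of_rows d [a, b] $$ (1,j)"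
    using i j PX_carrier[of d a b p r] by (auto simp: scalar_prod_def row_def col_def)
  also have "\<dots> = (p * a $ i + r * b $ i) * a $ j + (r * a $ i + p * b $ i) * b $ j"
    using i j by (simp add: PX_def mat_of_rows_index)
  finally show ?thesis .
qed

lemma PX_pinv:
  assumes a: "a \<in> carrier_vec d" and b: "b \<in> carrier_vec d"
  and h1: "p * (scalar_prod a a) + r * (scalar_prod a b) = 1" and h2: "r * (scalar_prod a a) + p * (scalar_prod a b) = 0"
  and bb: "scalar_prod b b = scalar_prod a a"
  shows "pinv (mat_of_rows d [a, b]) = PX d a b p r"
proof -
  let ?E = "mat_of_rows d [a, b]" and ?X = "PX d a b p r"
  have EX: "?E * ?X = 1\<^sub>m 2" using E_PX[OF assms] .
  have Ec: "?E \<in> carrier_mat 2 d" using mat_of_rows_carrier(1)[of d "[a,b]"] by (simp add: numeral_2_eq_2)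
  have Xc: "?X \<in> carrier_mat d 2" by (rule PX_carrier)
  show ?thesis
  proof (rule pinv_eqI)
    show "?X \<in> carrier_mat (dim_col ?E) (dim_row ?E)" using Xc by (simp add: numeral_2_eq_2)
    show "?E * ?X * ?E = ?E" using EX by simp
    have "?X * ?E * ?X = ?X * (?E * ?X)" by (rule assoc_mult_mat[OF Xc Ec Xc])
    then show "?X * ?E * ?X = ?X" using EX Xc by simp
    show "transpose_mat (?E * ?X) = ?E * ?X" using EX by simp
    show "transpose_mat (?X * ?E) = ?X * ?E"
    proof (rule eq_matI)
      fix i j assume "i < dim_row (?X * ?E)" "j < dim_col (?X * ?E)"
      then have i: "i < d" and j: "j < d" using Xc by auto
      show "transpose_mat (?X * ?E) $$ (i, j) = (?X * ?E) $$ (i, j)"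
        using i j Xc by (simp add: PX_E_entry[OF a b] algebra_simps del: index_mult_mat(1))
    qed (use Xc in auto)
  qed
qed

lemma sp_vec_sum:
  assumes "v \<in> carrier_vec d"
  shows "scalar_prod (vec d f) v = (\<Sum>i<d. f i * v $ i)"
  using assms unfolding scalar_prod_def by (simp add: lessThan_atLeast0)

lemma pred_loss_formula:
  assumes a: "a \<in> carrier_vec d" and b: "b \<in> carrier_vec d" and q: "q \<in> carrier_vec d"
  and h1: "p * (scalar_prod a a) + r * (scalar_prod a b) = 1" and h2: "r * (scalar_prod a a) + p * (scalar_prod a b) = 0"
  and bb: "scalar_prod b b = scalar_prod a a" and qa: "scalar_prod q a = s" and qb: "scalar_prod q b = s"
  shows "pred_loss d [a, b] (vec d \<theta>) q =
     (\<Sum>i<d. \<theta> i * (q $ i - s * (p + r) * (a $ i + b $ i)))\<^sup>2"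
proof -
  let ?E = "mat_of_rows d [a, b]" and ?X = "PX d a b p r" and ?t = "vec d \<theta>"
  have Xc: "?X \<in> carrier_mat d 2" by (rule PX_carrier)
  have tc: "?t \<in> carrier_vec d" by simp
  define A where "A = scalar_prod a ?t"
  define B where "B = scalar_prod b ?t"
  have rowXE: "row (?X * ?E) i = vec d (\<lambda>j. (p * a $ i + r * b $ i) * a $ j + (r * a $ i + p * b $ i) * b $ j)"
    if i: "i < d" for i
    using Xc i PX_E_entry[OF a b i] by (intro eq_vecI) (auto simp del: index_mult_mat(1))
  have P: "(?X * ?E) *\<^sub>v ?t = vec d (\<lambda>i. (p * a $ i + r * b $ i) * A + (r * a $ i + p * b $ i) * B)"
  proof (rule eq_vecI)
    fix i assume "i < dim_vec (vec d (\<lambda>i. (p * a $ i + r * b $ i) * A + (r * a $ i + p * b $ i) * B))"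
    then have i: "i < d" by simp
    have "((?X * ?E) *\<^sub>v ?t) $ i = scalar_prod (row (?X * ?E) i) ?t" using i Xc by simp
    also have "\<dots> = scalar_prod ?t (row (?X * ?E) i)"
      using i Xc rowXE[OF i] by (intro comm_scalar_prod[of _ d]) auto
    also have "\<dots> = (p * a $ i + r * b $ i) * A + (r * a $ i + p * b $ i) * B"
      unfolding rowXE[OF i] using sp_lin[OF a b tc] a b tc
      by (simp add: A_def B_def comm_scalar_prod[of a d ?t] comm_scalar_prod[of b d ?t])
    finally show "((?X * ?E) *\<^sub>v ?t) $ i = vec d (\<lambda>i. (p * a $ i + r * b $ i) * A + (r * a $ i + p * b $ i) * B) $ i"
      using i by simp
  qed (use Xc in simp)
  have P2: "vec d (\<lambda>i. (p * a $ i + r * b $ i) * A + (r * a $ i + p * b $ i) * B)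
      = vec d (\<lambda>i. (p * A + r * B) * a $ i + (r * A + p * B) * b $ i)"
    by (intro eq_vecI) (auto simp: algebra_simps)
  have Pc: "(?X * ?E) *\<^sub>v ?t \<in> carrier_vec d" using P by simp
  have "scalar_prod (?t - (?X * ?E) *\<^sub>v ?t) q = scalar_prod ?t q - scalar_prod ((?X * ?E) *\<^sub>v ?t) q"
    using Pc tc q by (simp add: minus_scalar_prod_distrib)
  also have "scalar_prod ((?X * ?E) *\<^sub>v ?t) q = scalar_prod q ((?X * ?E) *\<^sub>v ?t)"
    using Pc q by (simp add: comm_scalar_prod[of _ d])
  also have "\<dots> = (p * A + r * B) * s + (r * A + p * B) * s"
    unfolding P P2 using sp_lin[OF a b q] qa qb by simp
  also have "scalar_prod ?t q = (\<Sum>i<d. \<theta> i * q $ i)" using sp_vec_sum[OF q] by simp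
  also have "A = (\<Sum>i<d. \<theta> i * a $ i)" unfolding A_def using sp_vec_sum[OF a] a tc
    by (simp add: comm_scalar_prod[of a d ?t])
  also have "B = (\<Sum>i<d. \<theta> i * b $ i)" unfolding B_def using sp_vec_sum[OF b] b tc
    by (simp add: comm_scalar_prod[of b d ?t])
  finally have "scalar_prod (?t - (?X * ?E) *\<^sub>v ?t) q = (\<Sum>i<d. \<theta> i * (q $ i - s * (p + r) * (a $ i + b $ i)))"
    by (simp add: algebra_simps sum_distrib_left sum_subtractf sum.distrib)
  then show ?thesis
    unfolding pred_loss_def Let_def PX_pinv[OF a b h1 h2 bb] by simp
qed

abbreviation U01 :: "real measure" where "U01 \<equiv> uniform_measure lborel {0..1::real}"

lemma U01_eq: "U01 = density lborel (\<lambda>x. ennreal (indicator {0..1::real} x))"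
  unfolding uniform_measure_def by (simp add: ennreal_indicator divide_ennreal_def)

lemma U01_prob: "prob_space U01"
  by (rule prob_space_uniform_measure) auto

lemma U01_moment:
  shows "integrable U01 (\<lambda>x. x ^ k)" and "integral\<^sup>L U01 (\<lambda>x. x ^ k) = 1 / real (Suc k)"
proof -
  have i1: "integrable lborel (\<lambda>x::real. x ^ k * indicator {0..1} x)"
    by (rule borel_integrable_atLeastAtMost) auto
  show "integrable U01 (\<lambda>x. x ^ k)"
    unfolding U01_eq using i1
    by (subst integrable_density) (auto simp: mult.commute)
  have "integral\<^sup>L U01 (\<lambda>x. x ^ k) = (\<integral>x. indicator {0..1::real} x *\<^sub>R x ^ k \<partial>lborel)"
    unfolding U01_eq by (subst integral_density) auto
  also have "\<dots> = (\<integral>x. x ^ k * indicator {0..1::real} x \<partial>lborel)"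
    by (simp add: mult.commute)
  also have "\<dots> = 1 / real (Suc k)" by (subst integral_power) auto
  finally show "integral\<^sup>L U01 (\<lambda>x. x ^ k) = 1 / real (Suc k)" .
qed

lemma PSF: "product_sigma_finite (\<lambda>_::nat. U01)"
  unfolding product_sigma_finite_def using prob_space_imp_sigma_finite[OF U01_prob] by simp

lemma theta_mom:
  assumes i: "i < d" and j: "j < d"
  shows "integrable (theta_measure d) (\<lambda>\<theta>. \<theta> i * \<theta> j)"
    and "integral\<^sup>L (theta_measure d) (\<lambda>\<theta>. \<theta> i * \<theta> j) = (if i = j then 1/3 else 1/4)"
proof -
  define m where "m k = (if k = i then 1 else 0) + (if k = j then 1 else (0::nat))" for k
  have prodeq: "(\<Prod>k\<in>{..<d}. (\<theta> k) ^ m k) = \<theta> i * \<theta> j" for \<theta> :: "nat \<Rightarrow> real"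
  proof -
    have "(\<Prod>k\<in>{..<d}. (\<theta> k) ^ m k) = (\<Prod>k\<in>{..<d}. (if k = i then \<theta> k else 1) * (if k = j then \<theta> k else 1))"
      by (rule prod.cong) (auto simp: m_def power_add)
    also have "\<dots> = \<theta> i * \<theta> j" using i j by (simp add: prod.distrib)
    finally show ?thesis .
  qed
  have int: "\<And>k. k \<in> {..<d} \<Longrightarrow> integrable U01 (\<lambda>x. x ^ m k)" using U01_moment(1) by blast
  have "integrable (theta_measure d) (\<lambda>\<theta>. \<Prod>k\<in>{..<d}. (\<theta> k) ^ m k)"
    unfolding theta_measure_def
    using product_sigma_finite.product_integrable_prod[OF PSF, of "{..<d}" "\<lambda>k x. x ^ m k"] int by simp
  then show "integrable (theta_measure d) (\<lambda>\<theta>. \<theta> i * \<theta> j)" by (simp add: prodeq)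
  have "integral\<^sup>L (theta_measure d) (\<lambda>\<theta>. \<theta> i * \<theta> j) =
      integral\<^sup>L (theta_measure d) (\<lambda>\<theta>. \<Prod>k\<in>{..<d}. (\<theta> k) ^ m k)" by (simp add: prodeq)
  also have "\<dots> = (\<Prod>k\<in>{..<d}. integral\<^sup>L U01 (\<lambda>x. x ^ m k))"
    unfolding theta_measure_def
    using product_sigma_finite.product_integral_prod[OF PSF, of "{..<d}" "\<lambda>k x. x ^ m k"] int by simp
  also have "\<dots> = (\<Prod>k\<in>{..<d}. 1 / real (Suc (m k)))" by (simp add: U01_moment(2))
  also have "\<dots> = (if i = j then 1/3 else 1/4)"
  proof (cases "i = j")
    case True
    have "(\<Prod>k\<in>{..<d}. 1 / real (Suc (m k))) = (\<Prod>k\<in>{..<d}. (if k = i then 1/3 else 1))"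
      by (rule prod.cong) (auto simp: m_def True)
    also have "\<dots> = 1/3" using i by simp
    finally show ?thesis using True by simp
  next
    case False
    have "(\<Prod>k\<in>{..<d}. 1 / real (Suc (m k))) = (\<Prod>k\<in>{..<d}. (if k = i then 1/2 else 1) * (if k = j then 1/2 else 1))"
      by (rule prod.cong) (use False in \<open>auto simp: m_def\<close>)
    also have "\<dots> = 1/4" using i j False by (simp add: prod.distrib)
    finally show ?thesis using False by simp
  qed
  finally show "integral\<^sup>L (theta_measure d) (\<lambda>\<theta>. \<theta> i * \<theta> j) = (if i = j then 1/3 else 1/4)" .
qed

lemma theta_sq:
  fixes r :: "nat \<Rightarrow> real"
  shows "integral\<^sup>L (theta_measure d) (\<lambda>\<theta>. (\<Sum>i<d. \<theta> i * r i)\<^sup>2)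
     = (\<Sum>i<d. (r i)\<^sup>2) / 12 + (\<Sum>i<d. r i)\<^sup>2 / 4"
proof -
  have eq: "(\<Sum>i<d. \<theta> i * r i)\<^sup>2 = (\<Sum>i<d. \<Sum>j<d. r i * r j * (\<theta> i * \<theta> j))" for \<theta> :: "nat \<Rightarrow> real"
    by (simp add: power2_eq_square sum_product algebra_simps)
  have intij: "integrable (theta_measure d) (\<lambda>\<theta>. r i * r j * (\<theta> i * \<theta> j))" if "i < d" "j < d" for i j
    using theta_mom(1)[OF that] by simp
  have "integral\<^sup>L (theta_measure d) (\<lambda>\<theta>. (\<Sum>i<d. \<theta> i * r i)\<^sup>2)
      = integral\<^sup>L (theta_measure d) (\<lambda>\<theta>. \<Sum>i<d. \<Sum>j<d. r i * r j * (\<theta> i * \<theta> j))"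
    by (simp add: eq)
  also have "\<dots> = (\<Sum>i<d. integral\<^sup>L (theta_measure d) (\<lambda>\<theta>. \<Sum>j<d. r i * r j * (\<theta> i * \<theta> j)))"
    by (rule Bochner_Integration.integral_sum[where I="{..<d}" and f="\<lambda>i \<theta>. \<Sum>j<d. r i * r j * (\<theta> i * \<theta> j)"])
      (auto intro!: integrable_sum intij)
  also have "\<dots> = (\<Sum>i<d. \<Sum>j<d. integral\<^sup>L (theta_measure d) (\<lambda>\<theta>. r i * r j * (\<theta> i * \<theta> j)))"
    by (rule sum.cong[OF refl], rule Bochner_Integration.integral_sum[where f="\<lambda>j \<theta>. r i * r j * (\<theta> i * \<theta> j)" for i]) (metis intij lessThan_iff)
  also have "\<dots> = (\<Sum>i<d. \<Sum>j<d. r i * r j * (1/4) + (if i = j then r i * r j / 12 else 0))"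
    by (intro sum.cong refl) (simp add: theta_mom(2))
  also have "\<dots> = (\<Sum>i<d. (r i)\<^sup>2) / 12 + (\<Sum>i<d. r i)\<^sup>2 / 4"
    by (simp add: sum.distrib power2_eq_square sum_product sum_divide_distrib algebra_simps)
  finally show ?thesis .
qed

lemma indvec_carrier[simp]: "indvec d S \<in> carrier_vec d"
  unfolding indvec_def by simp

lemma indvec_index: "i < d \<Longrightarrow> indvec d S $ i = (if Suc i \<in> S then 1 else 0)"
  unfolding indvec_def by simp

lemma card_shift:
  assumes "S \<subseteq> {1..d}"
  shows "card {i \<in> {..<d}. Suc i \<in> S} = card S"
proof -
  have "Suc ` {i \<in> {..<d}. Suc i \<in> S} = S"
  proof
    show "Suc ` {i \<in> {..<d}. Suc i \<in> S} \<subseteq> S" by auto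
    show "S \<subseteq> Suc ` {i \<in> {..<d}. Suc i \<in> S}"
    proof
      fix x assume x: "x \<in> S"
      then have "x \<ge> 1" "x \<le> d" using assms by auto
      then have "x = Suc (x - 1)" "x - 1 < d" by auto
      then show "x \<in> Suc ` {i \<in> {..<d}. Suc i \<in> S}" using x by (metis (mono_tags) image_eqI mem_Collect_eq lessThan_iff)
    qed
  qed
  moreover have "inj_on Suc {i \<in> {..<d}. Suc i \<in> S}" by simp
  ultimately show ?thesis by (metis card_image)
qed

lemma sum_ind_prod:
  assumes "A \<subseteq> {1..d}" "B \<subseteq> {1..d}"
  shows "(\<Sum>i<d. indvec d A $ i * indvec d B $ i) = real (card (A \<inter> B))"
proof -
  have "(\<Sum>i<d. indvec d A $ i * indvec d B $ i) = (\<Sum>i<d. if Suc i \<in> A \<inter> B then 1 else 0)"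
    by (rule sum.cong) (auto simp: indvec_index)
  also have "\<dots> = real (card {i \<in> {..<d}. Suc i \<in> A \<inter> B})"
    by (simp add: sum.If_cases Int_def)
  also have "\<dots> = real (card (A \<inter> B))" using assms by (subst card_shift) auto
  finally show ?thesis .
qed

lemma sum_ind:
  assumes "A \<subseteq> {1..d}"
  shows "(\<Sum>i<d. indvec d A $ i) = real (card A)"
proof -
  have "(\<Sum>i<d. indvec d A $ i) = (\<Sum>i<d. indvec d A $ i * indvec d A $ i)"
    by (rule sum.cong) (auto simp: indvec_index)
  then show ?thesis using sum_ind_prod[OF assms assms] by simp
qed

lemma sp_ind:
  assumes "A \<subseteq> {1..d}" "B \<subseteq> {1..d}"
  shows "scalar_prod (indvec d A) (indvec d B) = real (card (A \<inter> B))"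
  using sum_ind_prod[OF assms] sp_vec_sum[of "indvec d B" d "\<lambda>i. if Suc i \<in> A then 1 else 0"]
  unfolding indvec_def by (simp add: indvec_index[unfolded indvec_def])

lemma loss_ind:
  assumes A: "A \<subseteq> {1..d}" and B: "B \<subseteq> {1..d}" and Q: "Q \<subseteq> {1..d}"
  and cA: "card A = n" and cB: "card B = n" and cAB: "card (A \<inter> B) = c" and cn: "c < n"
  and sA: "card (Q \<inter> A) = s" and sB: "card (Q \<inter> B) = s" and cQ: "card Q = nq"
  shows "integral\<^sup>L (theta_measure d) (\<lambda>\<theta>. pred_loss d [indvec d A, indvec d B] (vec d \<theta>) (indvec d Q))
     = (real nq - 4 * (real s / (real n + real c)) * real s + 2 * (real s / (real n + real c))\<^sup>2 * (real n + real c)) / 12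
       + (real nq - 2 * (real s / (real n + real c)) * real n)\<^sup>2 / 4"
proof -
  let ?a = "indvec d A" and ?b = "indvec d B" and ?q = "indvec d Q"
  define D where "D = real n * real n - real c * real c"
  define p where "p = real n / D"
  define r where "r = - real c / D"
  define t where "t = real s / (real n + real c)"
  have D0: "D \<noteq> 0" using cn unfolding D_def
    by (metis diff_gt_0_iff_gt mult_strict_mono' not_less_iff_gr_or_eq of_nat_0_le_iff of_nat_less_iff)
  have nc0: "real n + real c \<noteq> 0" using cn by simp
  have aa: "scalar_prod ?a ?a = real n" using sp_ind[OF A A] cA by simp
  have bb: "scalar_prod ?b ?b = real n" using sp_ind[OF B B] cB by simp
  have ab: "scalar_prod ?a ?b = real c" using sp_ind[OF A B] cAB by simp
  have qa: "scalar_prod ?q ?a = real s" using sp_ind[OF Q A] sA by simp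
  have qb: "scalar_prod ?q ?b = real s" using sp_ind[OF Q B] sB by simp
  have "p * real n + r * real c = (real n * real n - real c * real c) / D"
    using D0 unfolding p_def r_def by (simp add: field_simps)
  then have h1: "p * scalar_prod ?a ?a + r * scalar_prod ?a ?b = 1"
    using D0 unfolding aa ab by (simp add: D_def)
  have h2: "r * scalar_prod ?a ?a + p * scalar_prod ?a ?b = 0"
    using D0 unfolding aa ab p_def r_def D_def by (simp add: field_simps)
  have nc1: "real n - real c \<noteq> 0" using cn by simp
  have Dfac: "D = (real n + real c) * (real n - real c)" unfolding D_def by (simp add: algebra_simps)
  have "p + r = (real n - real c) / D" unfolding p_def r_def by (simp add: diff_divide_distrib)
  also have "\<dots> = 1 / (real n + real c)" unfolding Dfac using nc1 nc0 by simp
  finally have pr: "real s * (p + r) = t" unfolding t_def by simp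
  have "integral\<^sup>L (theta_measure d) (\<lambda>\<theta>. pred_loss d [?a, ?b] (vec d \<theta>) ?q)
     = integral\<^sup>L (theta_measure d) (\<lambda>\<theta>. (\<Sum>i<d. \<theta> i * (?q $ i - t * (?a $ i + ?b $ i)))\<^sup>2)"
    using pred_loss_formula[OF indvec_carrier indvec_carrier indvec_carrier h1 h2, of \<theta> for \<theta>] bb aa qa qb pr
    by simp
  also have "\<dots> = (\<Sum>i<d. (?q $ i - t * (?a $ i + ?b $ i))\<^sup>2) / 12 + (\<Sum>i<d. ?q $ i - t * (?a $ i + ?b $ i))\<^sup>2 / 4"
    by (rule theta_sq)
  also have "(\<Sum>i<d. ?q $ i - t * (?a $ i + ?b $ i)) = real nq - 2 * t * real n"
    using sum_ind[OF Q] sum_ind[OF A] sum_ind[OF B] cQ cA cB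
    by (simp add: sum_subtractf sum.distrib sum_distrib_left[symmetric])
  also have "(\<Sum>i<d. (?q $ i - t * (?a $ i + ?b $ i))\<^sup>2) = real nq - 4 * t * real s + 2 * t\<^sup>2 * (real n + real c)"
  proof -
    have "(\<Sum>i<d. (?q $ i - t * (?a $ i + ?b $ i))\<^sup>2) = (\<Sum>i<d. ?q $ i * ?q $ i - 2 * t * (?q $ i * ?a $ i) - 2 * t * (?q $ i * ?b $ i)
       + t\<^sup>2 * (?a $ i * ?a $ i) + 2 * t\<^sup>2 * (?a $ i * ?b $ i) + t\<^sup>2 * (?b $ i * ?b $ i))"
      by (rule sum.cong) (simp_all add: power2_eq_square algebra_simps)
    also have "\<dots> = (\<Sum>i<d. ?q $ i * ?q $ i) - 2 * t * (\<Sum>i<d. ?q $ i * ?a $ i) - 2 * t * (\<Sum>i<d. ?q $ i * ?b $ i)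
       + t\<^sup>2 * (\<Sum>i<d. ?a $ i * ?a $ i) + 2 * t\<^sup>2 * (\<Sum>i<d. ?a $ i * ?b $ i) + t\<^sup>2 * (\<Sum>i<d. ?b $ i * ?b $ i)"
      by (simp add: sum.distrib sum_subtractf sum_distrib_left)
    also have "\<dots> = real nq - 4 * t * real s + 2 * t\<^sup>2 * (real n + real c)"
      unfolding sum_ind_prod[OF Q Q] sum_ind_prod[OF Q A] sum_ind_prod[OF Q B] sum_ind_prod[OF A A]
        sum_ind_prod[OF A B] sum_ind_prod[OF B B]
      using cQ cA cB cAB sA sB by (simp add: algebra_simps)
    finally show ?thesis .
  qed
  finally show ?thesis unfolding t_def by simp
qed

lemma expect_const:
  assumes "\<And>x. x \<in> set_pmf p \<Longrightarrow> f x = (c::real)"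
  shows "measure_pmf.expectation p f = c"
proof -
  have "measure_pmf.expectation p f = measure_pmf.expectation p (\<lambda>_. c)"
    by (rule integral_cong_AE) (auto intro!: AE_pmfI assms)
  then show ?thesis by simp
qed

lemma avg_gt:
  fixes f :: "'a \<Rightarrow> real"
  assumes "finite S" "x0 \<in> S" "\<And>x. x \<in> S \<Longrightarrow> f x \<ge> c" "f x0 > c"
  shows "sum f S / real (card S) > c"
proof -
  have cpos: "card S > 0" using assms(1,2) card_gt_0_iff by blast
  have "(\<Sum>x\<in>S. c) < sum f S"
    using assms by (intro sum_strict_mono_ex1) auto
  then have "c * real (card S) < sum f S" by (simp add: mult.commute)
  then show ?thesis using cpos by (simp add: field_simps)
qed

lemma Vc2:
  fixes L :: real assumes "L \<ge> 3"
  shows "(L - 4 * ((L - 1) / (L + (L - 2))) * (L - 1) + 2 * ((L - 1) / (L + (L - 2)))\<^sup>2 * (L + (L - 2))) / 12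
     + (L - 2 * ((L - 1) / (L + (L - 2))) * L)\<^sup>2 / 4 = 1 / 12"
proof -
  have t: "(L - 1) / (L + (L - 2)) = 1/2" using assms by (simp add: field_simps)
  show ?thesis unfolding t by (simp add: power2_eq_square field_simps)
qed

lemma Vc1:
  fixes L :: real assumes "L \<ge> 3"
  shows "(L - 4 * ((L - 1) / (L + (L - 1))) * (L - 1) + 2 * ((L - 1) / (L + (L - 1)))\<^sup>2 * (L + (L - 1))) / 12
     + (L - 2 * ((L - 1) / (L + (L - 1))) * L)\<^sup>2 / 4 > 1 / 12"
proof -
  define t where "t = (L - 1) / (L + (L - 1))"
  have pos: "L + (L - 1) > 0" using assms by simp
  have tt: "t * (L + (L - 1)) = L - 1" unfolding t_def using pos by simp
  have "2 * t\<^sup>2 * (L + (L - 1)) = 2 * t * (t * (L + (L - 1)))" by (simp add: power2_eq_square mult.assoc)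
  also have "\<dots> = 2 * t * (L - 1)" by (simp only: tt)
  finally have "2 * t\<^sup>2 * (L + (L - 1)) = 2 * t * (L - 1)" .
  then have "4 * t * (L - 1) - 2 * t\<^sup>2 * (L + (L - 1)) = 2 * t * (L - 1)" by simp
  also have "\<dots> = 2 * (L - 1)^2 / (L + (L - 1))" unfolding t_def using pos by (simp add: power2_eq_square)
  moreover have "2 * (L - 1)^2 / (L + (L - 1)) < L - 1"
    using pos assms by (simp add: field_simps power2_eq_square) 
  ultimately have "(L - 4 * t * (L - 1) + 2 * t\<^sup>2 * (L + (L - 1))) / 12 > 1 / 12" by simp
  moreover have "(L - 2 * t * L)\<^sup>2 / 4 \<ge> 0" by simp
  ultimately show ?thesis unfolding t_def by linarith
qed

lemma demo_iff1:
  assumes "e \<in> demo_set l"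
  shows "\<exists>T1 j. T1 \<subseteq> {1..2*l} \<and> card T1 = l - 1 \<and> j \<in> {2*l+1..4*l} \<and> e = indvec (4*l) (insert j T1)"
proof -
  have "\<exists>T1 T2. e = indvec (4 * l) (T1 \<union> T2) \<and> T1 \<subseteq> {1..2 * l} \<and> card T1 = l - 1 \<and>
    T2 \<subseteq> {2 * l + 1..4 * l} \<and> card T2 = 1" using assms unfolding demo_set_def by (simp only: mem_Collect_eq)
  then obtain T1 T2 where h: "e = indvec (4 * l) (T1 \<union> T2)" "T1 \<subseteq> {1..2 * l}" "card T1 = l - 1"
    "T2 \<subseteq> {2 * l + 1..4 * l}" "card T2 = 1" by (elim exE conjE)
  obtain j where j: "T2 = {j}" using h(5) by (rule card_1_singletonE)
  have e: "e = indvec (4*l) (insert j T1)" using h(1) j by simp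
  have jj: "j \<in> {2*l+1..4*l}" using h(4) j by simp
  show ?thesis using h(2,3) e jj by blast
qed

lemma demo_iff2:
  assumes "T1 \<subseteq> {1..2*l}" "card T1 = l - 1" "j \<in> {2*l+1..4*l}"
  shows "indvec (4*l) (insert j T1) \<in> demo_set l"
proof -
  have "indvec (4*l) (insert j T1) = indvec (4*l) (T1 \<union> {j})" by simp
  moreover have "{j} \<subseteq> {2 * l + 1..4 * l}" "card {j} = 1" using assms(3) by auto
  ultimately show ?thesis unfolding demo_set_def using assms(1,2) by blast
qed

lemma demo_iff:
  "e \<in> demo_set l \<longleftrightarrow> (\<exists>T1 j. T1 \<subseteq> {1..2*l} \<and> card T1 = l - 1 \<and> j \<in> {2*l+1..4*l} \<and>
      e = indvec (4*l) (insert j T1))"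
  using demo_iff1 demo_iff2 by blast

lemma demo_finite: "finite (demo_set l)"
proof -
  have "demo_set l \<subseteq> (\<lambda>(T1, j). indvec (4*l) (insert j T1)) ` (Pow {1..2*l} \<times> {2*l+1..4*l})"
  proof
    fix e assume "e \<in> demo_set l"
    then obtain T1 j where h: "T1 \<subseteq> {1..2*l}" "j \<in> {2*l+1..4*l}" "e = indvec (4*l) (insert j T1)"
      unfolding demo_iff by blast
    then show "e \<in> (\<lambda>(T1, j). indvec (4*l) (insert j T1)) ` (Pow {1..2*l} \<times> {2*l+1..4*l})"
      by (intro image_eqI[of _ _ "(T1, j)"]) auto
  qed
  then show ?thesis by (rule finite_subset) auto
qed

lemma dv_sub: "(T1::nat set) \<subseteq> {1..2*(l::nat)} \<Longrightarrow> j \<in> {2*l+1..4*l} \<Longrightarrow> insert j T1 \<subseteq> {1..4*l}"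
  by auto

lemma dv_card: "T1 \<subseteq> {1..2*(l::nat)} \<Longrightarrow> card T1 = l - 1 \<Longrightarrow> j \<in> {2*l+1..4*l} \<Longrightarrow> l \<ge> 1 \<Longrightarrow>
   card (insert j T1) = l"
proof -
  assume a: "T1 \<subseteq> {1..2*l}" "card T1 = l - 1" "j \<in> {2*l+1..4*l}" "l \<ge> 1"
  have "finite T1" using a(1) finite_subset by blast
  moreover have "j \<notin> T1" using a(1,3) by auto
  ultimately show ?thesis using a by simp
qed

lemma dv_int_T: "T \<subseteq> {1..2*(l::nat)} \<Longrightarrow> j \<in> {2*l+1..4*l} \<Longrightarrow> insert j T1 \<inter> T = T1 \<inter> T"
  by auto

lemma dv_int_dv:
  assumes "T1 \<subseteq> {1..2*(l::nat)}" "T1' \<subseteq> {1..2*l}" "j \<in> {2*l+1..4*l}" "j' \<in> {2*l+1..4*l}"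
  shows "card (insert j T1 \<inter> insert j' T1') = card (T1 \<inter> T1') + (if j = j' then 1 else 0)"
proof (cases "j = j'")
  case True
  have "insert j T1 \<inter> insert j' T1' = insert j (T1 \<inter> T1')" using True by auto
  moreover have "finite (T1 \<inter> T1')" using assms(1) finite_subset by blast
  moreover have "j \<notin> T1 \<inter> T1'" using assms by auto
  ultimately show ?thesis using True by simp
next
  case False
  have "insert j T1 \<inter> insert j' T1' = T1 \<inter> T1'" using False assms by auto
  then show ?thesis using False by simp
qed

lemma vnorm_ind: "A \<subseteq> {1..d} \<Longrightarrow> vnorm (indvec d A) = sqrt (real (card A))"
  unfolding vnorm_def using sp_ind[of A d A] by simp

lemma Sim_ind:
  assumes "A \<subseteq> {1..d}" "B \<subseteq> {1..d}" "card A = n" "card B = n"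
  shows "Sim (indvec d A) (indvec d B) = real (card (A \<inter> B)) / real n"
  unfolding Sim_def using assms by (simp add: sp_ind vnorm_ind)

lemma indvec_neq:
  assumes "x \<in> A" "x \<notin> B" "x \<in> {1..d}"
  shows "indvec d A \<noteq> indvec d B"
proof
  assume h: "indvec d A = indvec d B"
  have "x - 1 < d" "Suc (x - 1) = x" using assms(3) by auto
  then have "indvec d A $ (x - 1) = 1" "indvec d B $ (x - 1) = 0"
    using assms by (simp_all add: indvec_index)
  then show False using h by simp
qed

lemma two_subsets_int:
  fixes T :: "nat set"
  assumes "T1 \<subseteq> T" "T1' \<subseteq> T" "card T = l" "card T1 = l - 1" "card T1' = l - 1" "T1 \<noteq> T1'"
    "finite T" "l \<ge> 1"
  shows "card (T1 \<inter> T1') = l - 2"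
proof -
  have f1: "finite T1" "finite T1'" using assms finite_subset by blast+
  have "\<not> T1' \<subseteq> T1"
    using card_subset_eq[of T1 T1'] f1 assms by auto
  then have "T1 \<subset> T1 \<union> T1'" by auto
  then have "card T1 < card (T1 \<union> T1')" using f1 by (intro psubset_card_mono) auto
  moreover have "card (T1 \<union> T1') \<le> l" using assms card_mono[of T "T1 \<union> T1'"] by auto
  ultimately have "card (T1 \<union> T1') = l" using assms by linarith
  moreover have "card (T1 \<union> T1') + card (T1 \<inter> T1') = card T1 + card T1'"
    using card_Un_Int[OF f1] by simp
  ultimately show ?thesis using assms by linarith
qed

lemma score_ineq:
  fixes l k m \<delta> :: nat and \<alpha> :: real
  assumes l3: "3 \<le> l" and a1: "1 - 1 / real l \<le> \<alpha>" and a2: "\<alpha> < 1"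
    and kl: "k \<le> l - 1" and km: "k \<le> m + 1" and mk: "m \<le> k" and d1: "\<delta> \<le> 1"
    and H0: "\<alpha> * (real (l - 1) / real l) + (1 - \<alpha>) * (1 - real (l - 2) / real l)
        \<le> \<alpha> * (real k / real l) + (1 - \<alpha>) * (1 - real (m + \<delta>) / real l)"
  shows "k = l - 1 \<and> m = l - 2 \<and> \<delta> = 0"
proof -
  define L where "L = real l"
  have L3: "L \<ge> 3" using l3 unfolding L_def by simp
  have Lp: "L > 0" using L3 by simp
  have rl1: "real (l - 1) = L - 1" and rl2: "real (l - 2) = L - 2" using l3 unfolding L_def by auto
  have e1: "\<alpha> * ((L - 1) / L) + (1 - \<alpha>) * (1 - (L - 2) / L) = (\<alpha> * (L - 1) + (1 - \<alpha>) * 2) / L"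
    using Lp by (simp add: field_simps)
  have e2: "\<alpha> * (real k / L) + (1 - \<alpha>) * (1 - real (m + \<delta>) / L) = (\<alpha> * real k + (1 - \<alpha>) * (L - real m - real \<delta>)) / L"
    using Lp by (simp add: field_simps)
  have H: "\<alpha> * (L - 1) + (1 - \<alpha>) * 2 \<le> \<alpha> * real k + (1 - \<alpha>) * (L - real m - real \<delta>)"
    using H0 unfolding rl1 rl2 L_def[symmetric] e1 e2 using Lp by (simp add: divide_le_cancel)
  have a0: "1 - \<alpha> > 0" using a2 by simp
  have ah: "2 * \<alpha> - 1 > 0"
  proof -
    have "1 / L \<le> 1 / 3" using L3 by (simp add: field_simps)
    then show ?thesis using a1 unfolding L_def by linarith
  qed
  have kk: "k = l - 1"
  proof (rule ccontr)
    assume "k \<noteq> l - 1"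
    then have "real k \<le> L - 2" using kl l3 unfolding L_def by linarith
    then have pos: "(L - 1 - real k) * (2 * \<alpha> - 1) > 0" using ah by (intro mult_pos_pos) auto
    have "real m \<ge> real k - 1" using km by linarith
    then have "(1 - \<alpha>) * (L - real m - real \<delta>) \<le> (1 - \<alpha>) * (L - real k + 1)"
      using a0 by (intro mult_left_mono) auto
    then have "\<alpha> * (L - 1) + (1 - \<alpha>) * 2 \<le> \<alpha> * real k + (1 - \<alpha>) * (L - real k + 1)" using H by linarith
    then have "(L - 1 - real k) * (2 * \<alpha> - 1) \<le> 0" by (simp add: algebra_simps)
    then show False using pos by linarith
  qed
  have "(1 - \<alpha>) * 2 \<le> (1 - \<alpha>) * (L - real m - real \<delta>)" using H kk l3 unfolding L_def by simp
  then have "2 \<le> L - real m - real \<delta>" by (simp only: mult_le_cancel_left_pos[OF a0])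
  then have "m + \<delta> + 2 \<le> l" unfolding L_def by linarith
  then show ?thesis using kk km l3 by auto
qed

definition TKset :: "nat \<Rightarrow> real vec \<Rightarrow> real vec list set" where
  "TKset l q = {xs. distinct xs \<and> length xs = 2 \<and> set xs \<subseteq> demo_set l \<and>
       (\<forall>x\<in>set xs. \<forall>y\<in>demo_set l - set xs. Sim y q \<le> Sim x q)}"

definition PL :: "nat \<Rightarrow> real vec list \<Rightarrow> real vec \<Rightarrow> real" where
  "PL l xs q = integral\<^sup>L (theta_measure (4 * l)) (\<lambda>\<theta>. pred_loss (4 * l) xs (vec (4 * l) \<theta>) q)"

lemma TK_fin: "finite (TKset l q)"
proof -
  have "TKset l q \<subseteq> {xs. set xs \<subseteq> demo_set l \<and> length xs = 2}" unfolding TKset_def by auto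
  then show ?thesis using finite_lists_length_eq[OF demo_finite[of l], of 2] finite_subset by blast
qed

lemma argset_ne:
  fixes f :: "'a \<Rightarrow> real"
  assumes "finite A" "A \<noteq> {}"
  shows "{e \<in> A. \<forall>e'\<in>A. f e' \<le> f e} \<noteq> {}"
proof -
  have "Max (f ` A) \<in> f ` A" using assms by (intro Max_in) auto
  then obtain e where e: "e \<in> A" "f e = Max (f ` A)" by (metis imageE)
  have "\<forall>e'\<in>A. f e' \<le> f e" using e assms by auto
  then show ?thesis using e by blast
qed

lemma pigeon3: "a \<in> {x, y} \<Longrightarrow> b \<in> {x, y} \<Longrightarrow> c \<in> {x, y} \<Longrightarrow> a \<noteq> b \<Longrightarrow> a \<noteq> c \<Longrightarrow> b \<noteq> c \<Longrightarrow> False"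
  by auto

lemma sub_of_card:
  assumes "finite T1" "card T1 = l - 1" "card (T1 \<inter> T) \<ge> l - 1"
  shows "T1 \<subseteq> T"
proof -
  have "card (T1 \<inter> T) \<le> card T1" using assms(1) by (intro card_mono) auto
  then have "card (T1 \<inter> T) = card T1" using assms by linarith
  then have "T1 \<inter> T = T1" using assms(1) by (intro card_subset_eq) auto
  then show ?thesis by blast
qed


lemma div_score_empty: "div_score \<alpha> q {} e = \<alpha> * Sim e q"
  unfolding div_score_def Div_def by simp

lemma div_score_one: "div_score \<alpha> q {x} e = \<alpha> * Sim e q + (1 - \<alpha>) * (1 - Sim e x)"
  unfolding div_score_def Div_def by simp

context
  fixes l :: nat and T :: "nat set"
  assumes l3: "3 \<le> l" and TS: "T \<subseteq> {1..2*l}" and TC: "card T = l"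
begin

lemma finT: "finite T" using TS finite_subset by blast

lemma TS4: "T \<subseteq> {1..4*l}" using TS by auto

lemma sim_dv:
  assumes "T1 \<subseteq> {1..2*l}" "card T1 = l - 1" "j \<in> {2*l+1..4*l}"
  shows "Sim (indvec (4*l) (insert j T1)) (indvec (4*l) T) = real (card (T1 \<inter> T)) / real l"
proof -
  have "Sim (indvec (4*l) (insert j T1)) (indvec (4*l) T) = real (card (insert j T1 \<inter> T)) / real l"
    using l3 by (intro Sim_ind dv_sub TS4 dv_card assms TC) auto
  also have "insert j T1 \<inter> T = T1 \<inter> T" using dv_int_T[OF TS assms(3)] .
  finally show ?thesis .
qed

lemma card_T1T:
  assumes "T1 \<subseteq> {1..2*l}" "card T1 = l - 1"
  shows "card (T1 \<inter> T) \<le> l - 1"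
proof -
  have "finite T1" using assms(1) finite_subset by blast
  then show ?thesis using assms(2) card_mono[of T1 "T1 \<inter> T"] by auto
qed

lemma sim_le:
  assumes "e \<in> demo_set l"
  shows "Sim e (indvec (4*l) T) \<le> (real l - 1) / real l"
proof -
  obtain T1 j where h: "T1 \<subseteq> {1..2*l}" "card T1 = l - 1" "j \<in> {2*l+1..4*l}" "e = indvec (4*l) (insert j T1)"
    using assms unfolding demo_iff by blast
  have "real (card (T1 \<inter> T)) \<le> real l - 1" using card_T1T[OF h(1,2)] l3 by linarith
  then show ?thesis using h sim_dv l3 by (simp add: divide_right_mono)
qed

lemma maxer:
  assumes "t \<in> T" "j \<in> {2*l+1..4*l}"
  shows "indvec (4*l) (insert j (T - {t})) \<in> demo_set l"
    and "Sim (indvec (4*l) (insert j (T - {t}))) (indvec (4*l) T) = (real l - 1) / real l"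
    and "T - {t} \<subseteq> {1..2*l}" and "card (T - {t}) = l - 1"
proof -
  show s: "T - {t} \<subseteq> {1..2*l}" using TS by auto
  show c: "card (T - {t}) = l - 1" using assms(1) finT TC by simp
  show "indvec (4*l) (insert j (T - {t})) \<in> demo_set l" using demo_iff2[OF s c assms(2)] .
  have "(T - {t}) \<inter> T = T - {t}" by auto
  then show "Sim (indvec (4*l) (insert j (T - {t}))) (indvec (4*l) T) = (real l - 1) / real l"
    using sim_dv[OF s c assms(2)] c l3 by simp
qed

lemma good_of_sim:
  assumes "T1 \<subseteq> {1..2*l}" "card T1 = l - 1" "j \<in> {2*l+1..4*l}"
    and "Sim (indvec (4*l) (insert j T1)) (indvec (4*l) T) \<ge> (real l - 1) / real l"
  shows "T1 \<subseteq> T"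
proof -
  have lp: "real l > 0" using l3 by simp
  have "(real l - 1) / real l \<le> real (card (T1 \<inter> T)) / real l" using assms sim_dv by simp
  then have "real l - 1 \<le> real (card (T1 \<inter> T))" using lp by (simp add: divide_le_cancel)
  then have "card (T1 \<inter> T) \<ge> l - 1" by linarith
  moreover have "finite T1" using assms(1) finite_subset by blast
  ultimately show ?thesis using sub_of_card assms(2) by blast
qed

lemma T_ne: "\<exists>t. t \<in> T" using TC l3 by (metis card.empty equals0I not_numeral_le_zero)

lemma wvec:
  assumes "t \<in> T" "k \<in> {1..3}"
  shows "indvec (4*l) (insert (2*l+k) (T - {t})) \<in> demo_set l"
    and "Sim (indvec (4*l) (insert (2*l+k) (T - {t}))) (indvec (4*l) T) = (real l - 1) / real l"
proof -
  have "2*l+k \<in> {2*l+1..4*l}" using assms(2) l3 by auto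
  then show "indvec (4*l) (insert (2*l+k) (T - {t})) \<in> demo_set l"
    and "Sim (indvec (4*l) (insert (2*l+k) (T - {t}))) (indvec (4*l) T) = (real l - 1) / real l"
    using maxer[OF assms(1)] by auto
qed

lemma wneq:
  assumes "k \<in> {1..3}" "k' \<in> {1..3}" "k \<noteq> k'"
  shows "indvec (4*l) (insert (2*l+k) (T - {t})) \<noteq> indvec (4*l) (insert (2*l+k') (T - {t}))"
proof (rule indvec_neq)
  show "2*l+k \<in> insert (2*l+k) (T - {t})" by simp
  show "2*l+k \<notin> insert (2*l+k') (T - {t})" using assms TS by auto
  show "2*l+k \<in> {1..4*l}" using assms l3 by auto
qed

lemma pair_val:
  assumes v1: "T1 \<subseteq> {1..2*l}" "card T1 = l - 1" "j \<in> {2*l+1..4*l}" "T1 \<subseteq> T"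
    and v2: "T1' \<subseteq> {1..2*l}" "card T1' = l - 1" "j' \<in> {2*l+1..4*l}" "T1' \<subseteq> T"
    and cc: "card (insert j T1 \<inter> insert j' T1') = c"
  shows "c = l - 2 \<Longrightarrow> PL l [indvec (4*l) (insert j T1), indvec (4*l) (insert j' T1')] (indvec (4*l) T) = 1/12"
    and "c = l - 1 \<Longrightarrow> PL l [indvec (4*l) (insert j T1), indvec (4*l) (insert j' T1')] (indvec (4*l) T) > 1/12"
proof -
  have l1: "l \<ge> 1" using l3 by simp
  have A: "insert j T1 \<subseteq> {1..4*l}" and B: "insert j' T1' \<subseteq> {1..4*l}" using dv_sub v1 v2 by auto
  have cA: "card (insert j T1) = l" using dv_card[OF v1(1-3) l1] .
  have cB: "card (insert j' T1') = l" using dv_card[OF v2(1-3) l1] .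
  have sA: "card (T \<inter> insert j T1) = l - 1" using v1 TS by (metis Int_commute dv_int_T inf.absorb1)
  have sB: "card (T \<inter> insert j' T1') = l - 1" using v2 TS by (metis Int_commute dv_int_T inf.absorb1)
  have L3: "real l \<ge> 3" using l3 by simp
  have r1: "real (l - 1) = real l - 1" and r2: "real (l - 2) = real l - 2" using l3 by auto
  show "c = l - 2 \<Longrightarrow> PL l [indvec (4*l) (insert j T1), indvec (4*l) (insert j' T1')] (indvec (4*l) T) = 1/12"
  proof -
    assume c2: "c = l - 2"
    have "PL l [indvec (4*l) (insert j T1), indvec (4*l) (insert j' T1')] (indvec (4*l) T)
       = (real l - 4 * (real (l - 1) / (real l + real (l - 2))) * real (l - 1) + 2 * (real (l - 1) / (real l + real (l - 2)))\<^sup>2 * (real l + real (l - 2))) / 12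
       + (real l - 2 * (real (l - 1) / (real l + real (l - 2))) * real l)\<^sup>2 / 4"
      unfolding PL_def using l3 c2 cc
      by (intro loss_ind[OF A B TS4 cA cB _ _ sA sB TC]) auto
    also have "\<dots> = 1/12" unfolding r1 r2 by (rule Vc2[OF L3])
    finally show ?thesis .
  qed
  show "c = l - 1 \<Longrightarrow> PL l [indvec (4*l) (insert j T1), indvec (4*l) (insert j' T1')] (indvec (4*l) T) > 1/12"
  proof -
    assume c1: "c = l - 1"
    have "PL l [indvec (4*l) (insert j T1), indvec (4*l) (insert j' T1')] (indvec (4*l) T)
       = (real l - 4 * (real (l - 1) / (real l + real (l - 1))) * real (l - 1) + 2 * (real (l - 1) / (real l + real (l - 1)))\<^sup>2 * (real l + real (l - 1))) / 12
       + (real l - 2 * (real (l - 1) / (real l + real (l - 1))) * real l)\<^sup>2 / 4"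
      unfolding PL_def using l3 c1 cc
      by (intro loss_ind[OF A B TS4 cA cB _ _ sA sB TC]) auto
    also have "\<dots> > 1/12" unfolding r1 by (rule Vc1[OF L3])
    finally show ?thesis .
  qed
qed

lemma pair_ge:
  assumes v1: "T1 \<subseteq> {1..2*l}" "card T1 = l - 1" "j \<in> {2*l+1..4*l}" "T1 \<subseteq> T"
    and v2: "T1' \<subseteq> {1..2*l}" "card T1' = l - 1" "j' \<in> {2*l+1..4*l}" "T1' \<subseteq> T"
    and ne: "indvec (4*l) (insert j T1) \<noteq> indvec (4*l) (insert j' T1')"
  shows "PL l [indvec (4*l) (insert j T1), indvec (4*l) (insert j' T1')] (indvec (4*l) T) \<ge> 1/12"
    and "T1 = T1' \<Longrightarrow> PL l [indvec (4*l) (insert j T1), indvec (4*l) (insert j' T1')] (indvec (4*l) T) > 1/12"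
proof -
  have cc: "card (insert j T1 \<inter> insert j' T1') = card (T1 \<inter> T1') + (if j = j' then 1 else 0)"
    using dv_int_dv[OF v1(1) v2(1) v1(3) v2(3)] .
  show gt: "T1 = T1' \<Longrightarrow> PL l [indvec (4*l) (insert j T1), indvec (4*l) (insert j' T1')] (indvec (4*l) T) > 1/12"
  proof -
    assume e: "T1 = T1'"
    then have "j \<noteq> j'" using ne by auto
    then have "card (insert j T1 \<inter> insert j' T1') = l - 1" using cc e v1 by simp
    then show ?thesis by (rule pair_val(2)[OF v1 v2]) simp
  qed
  show "PL l [indvec (4*l) (insert j T1), indvec (4*l) (insert j' T1')] (indvec (4*l) T) \<ge> 1/12"
  proof (cases "T1 = T1'")
    case True then show ?thesis using gt by simp
  next
    case False
    have i2: "card (T1 \<inter> T1') = l - 2"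
      using two_subsets_int[OF v1(4) v2(4) TC v1(2) v2(2) False finT] l3 by simp
    show ?thesis
    proof (cases "j = j'")
      case True
      then have "card (insert j T1 \<inter> insert j' T1') = l - 1" using cc i2 l3 by simp
      then show ?thesis using pair_val(2)[OF v1 v2] by fastforce
    next
      case False
      then have "card (insert j T1 \<inter> insert j' T1') = l - 2" using cc i2 by simp
      then show ?thesis using pair_val(1)[OF v1 v2] by fastforce
    qed
  qed
qed

lemma TK_elem:
  assumes xs: "xs \<in> TKset l (indvec (4*l) T)"
  shows "\<exists>T1 j T1' j'. xs = [indvec (4*l) (insert j T1), indvec (4*l) (insert j' T1')] \<and>
     T1 \<subseteq> {1..2*l} \<and> card T1 = l - 1 \<and> j \<in> {2*l+1..4*l} \<and> T1 \<subseteq> T \<and>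
     T1' \<subseteq> {1..2*l} \<and> card T1' = l - 1 \<and> j' \<in> {2*l+1..4*l} \<and> T1' \<subseteq> T \<and>
     indvec (4*l) (insert j T1) \<noteq> indvec (4*l) (insert j' T1')"
proof -
  have h: "distinct xs" "length xs = 2" "set xs \<subseteq> demo_set l"
    "\<forall>x\<in>set xs. \<forall>y\<in>demo_set l - set xs. Sim y (indvec (4*l) T) \<le> Sim x (indvec (4*l) T)"
    using xs unfolding TKset_def by auto
  obtain x ys where xys: "xs = x # ys" "length ys = 1" using h(2) by (cases xs) auto
  obtain y where ys: "ys = [y]" using xys(2) by (cases ys) auto
  have xs2: "xs = [x, y]" using xys ys by simp
  obtain t where t: "t \<in> T" using T_ne by blast
  let ?w = "\<lambda>k. indvec (4*l) (insert (2*l+k) (T - {t}))"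
  have n12: "?w 1 \<noteq> ?w 2" and n13: "?w 1 \<noteq> ?w 3" and n23: "?w 2 \<noteq> ?w 3"
    by (rule wneq; simp)+
  have "\<exists>k\<in>{1..3}. ?w k \<notin> {x, y}"
  proof (rule ccontr)
    assume a: "\<not> ?thesis"
    have ks: "(1::nat) \<in> {1..3}" "(2::nat) \<in> {1..3}" "(3::nat) \<in> {1..3}" by auto
    have "?w 1 \<in> {x, y}" "?w 2 \<in> {x, y}" "?w 3 \<in> {x, y}" using a ks by blast+
    then show False using pigeon3[OF _ _ _ n12 n13 n23] by blast
  qed
  then obtain k where k: "k \<in> {1..3}" "?w k \<notin> {x, y}" by blast
  have wD: "?w k \<in> demo_set l - set xs" using wvec(1)[OF t k(1)] k(2) xs2 by auto
  have ws: "Sim (?w k) (indvec (4*l) T) = (real l - 1) / real l" using wvec(2)[OF t k(1)] .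
  have good: "\<exists>T1 j. z = indvec (4*l) (insert j T1) \<and> T1 \<subseteq> {1..2*l} \<and> card T1 = l - 1 \<and>
      j \<in> {2*l+1..4*l} \<and> T1 \<subseteq> T" if z: "z \<in> set xs" for z
  proof -
    have zD: "z \<in> demo_set l" using z h(3) by auto
    have zs: "Sim z (indvec (4*l) T) \<ge> (real l - 1) / real l" using h(4) z wD unfolding ws[symmetric] by blast
    obtain T1 j where hh: "T1 \<subseteq> {1..2*l}" "card T1 = l - 1" "j \<in> {2*l+1..4*l}" "z = indvec (4*l) (insert j T1)"
      using zD unfolding demo_iff by blast
    have "T1 \<subseteq> T" using good_of_sim[OF hh(1-3)] zs hh(4) by simp
    then show ?thesis using hh by blast
  qed
  obtain T1 j where g1: "x = indvec (4*l) (insert j T1)" "T1 \<subseteq> {1..2*l}" "card T1 = l - 1"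
      "j \<in> {2*l+1..4*l}" "T1 \<subseteq> T" using good[of x] xs2 by auto
  obtain T1' j' where g2: "y = indvec (4*l) (insert j' T1')" "T1' \<subseteq> {1..2*l}" "card T1' = l - 1"
      "j' \<in> {2*l+1..4*l}" "T1' \<subseteq> T" using good[of y] xs2 by auto
  have "x \<noteq> y" using h(1) xs2 by simp
  then show ?thesis using xs2 g1 g2 by blast
qed

lemma TK_wit:
  assumes t: "t \<in> T"
  shows "[indvec (4*l) (insert (2*l+1) (T - {t})), indvec (4*l) (insert (2*l+2) (T - {t}))] \<in> TKset l (indvec (4*l) T)"
proof -
  let ?w = "\<lambda>k. indvec (4*l) (insert (2*l+k) (T - {t}))"
  have n12: "?w 1 \<noteq> ?w 2" by (rule wneq; simp)
  have ks: "(1::nat) \<in> {1..3}" "(2::nat) \<in> {1..3}" by auto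
  have D: "?w 1 \<in> demo_set l" "?w 2 \<in> demo_set l" using wvec(1)[OF t ks(1)] wvec(1)[OF t ks(2)] by blast+
  have S: "Sim (?w 1) (indvec (4*l) T) = (real l - 1) / real l" "Sim (?w 2) (indvec (4*l) T) = (real l - 1) / real l"
    using wvec(2)[OF t ks(1)] wvec(2)[OF t ks(2)] by blast+
  show ?thesis unfolding TKset_def using n12 D S sim_le by auto
qed

lemma ET_gt:
  "measure_pmf.expectation (pmf_of_set (TKset l (indvec (4*l) T))) (\<lambda>xs. PL l xs (indvec (4*l) T)) > 1/12"
proof -
  obtain t where t: "t \<in> T" using T_ne by blast
  have ne: "TKset l (indvec (4*l) T) \<noteq> {}" using TK_wit[OF t] by blast
  have "sum (\<lambda>xs. PL l xs (indvec (4*l) T)) (TKset l (indvec (4*l) T)) / real (card (TKset l (indvec (4*l) T))) > 1/12"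
  proof (rule avg_gt[OF TK_fin TK_wit[OF t]])
    fix xs assume "xs \<in> TKset l (indvec (4*l) T)"
    then show "PL l xs (indvec (4*l) T) \<ge> 1/12" using TK_elem pair_ge(1) by blast
  next
    have v: "T - {t} \<subseteq> {1..2*l}" "card (T - {t}) = l - 1" using maxer[OF t, of "2*l+1"] l3 by auto
    have j: "2*l+1 \<in> {2*l+1..4*l}" "2*l+2 \<in> {2*l+1..4*l}" using l3 by auto
    have n12: "indvec (4*l) (insert (2*l+1) (T - {t})) \<noteq> indvec (4*l) (insert (2*l+2) (T - {t}))"
      by (rule wneq; simp)
    show "PL l [indvec (4*l) (insert (2*l+1) (T - {t})), indvec (4*l) (insert (2*l+2) (T - {t}))] (indvec (4*l) T) > 1/12"
      by (rule pair_ge(2)[OF v j(1) _ v j(2) _ n12]) auto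
  qed
  then show ?thesis using ne TK_fin by (simp add: integral_pmf_of_set)
qed

lemma S0_elem:
  assumes a: "\<alpha> > 0"
    and e: "e \<in> {e \<in> demo_set l - set []. \<forall>e'\<in>demo_set l - set [].
         div_score \<alpha> (indvec (4*l) T) (set []) e' \<le> div_score \<alpha> (indvec (4*l) T) (set []) e}"
  shows "\<exists>T1 j. e = indvec (4*l) (insert j T1) \<and> T1 \<subseteq> {1..2*l} \<and> card T1 = l - 1 \<and>
      j \<in> {2*l+1..4*l} \<and> T1 \<subseteq> T"
proof -
  have eD: "e \<in> demo_set l" and le: "\<forall>e'\<in>demo_set l. \<alpha> * Sim e' (indvec (4*l) T) \<le> \<alpha> * Sim e (indvec (4*l) T)"
    using e by (auto simp: div_score_empty)
  obtain t where t: "t \<in> T" using T_ne by blast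
  have k1: "(1::nat) \<in> {1..3}" by simp
  have "\<alpha> * ((real l - 1) / real l) \<le> \<alpha> * Sim e (indvec (4*l) T)"
    using le wvec(1)[OF t k1] wvec(2)[OF t k1] by metis
  then have s: "(real l - 1) / real l \<le> Sim e (indvec (4*l) T)" using a by (metis mult_le_cancel_left_pos)
  obtain T1 j where hh: "T1 \<subseteq> {1..2*l}" "card T1 = l - 1" "j \<in> {2*l+1..4*l}" "e = indvec (4*l) (insert j T1)"
    using eD unfolding demo_iff by blast
  have "T1 \<subseteq> T" using good_of_sim[OF hh(1-3)] s hh(4) by simp
  then show ?thesis using hh by blast
qed

lemma S1_elem:
  assumes a1: "1 - 1 / real l \<le> \<alpha>" and a2: "\<alpha> < 1"
    and v1: "T1 \<subseteq> {1..2*l}" "card T1 = l - 1" "j \<in> {2*l+1..4*l}" "T1 \<subseteq> T"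
    and e: "e \<in> {e \<in> demo_set l - set [indvec (4*l) (insert j T1)]. \<forall>e'\<in>demo_set l - set [indvec (4*l) (insert j T1)].
         div_score \<alpha> (indvec (4*l) T) (set [indvec (4*l) (insert j T1)]) e'
           \<le> div_score \<alpha> (indvec (4*l) T) (set [indvec (4*l) (insert j T1)]) e}"
  shows "\<exists>T1' j'. e = indvec (4*l) (insert j' T1') \<and> T1' \<subseteq> {1..2*l} \<and> card T1' = l - 1 \<and>
      j' \<in> {2*l+1..4*l} \<and> T1' \<subseteq> T \<and> card (insert j T1 \<inter> insert j' T1') = l - 2"
proof -
  let ?x = "indvec (4*l) (insert j T1)" and ?q = "indvec (4*l) T"
  have l1: "l \<ge> 1" using l3 by simp
  have eD: "e \<in> demo_set l" "e \<noteq> ?x"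
    and le: "\<forall>e'\<in>demo_set l - {?x}. \<alpha> * Sim e' ?q + (1 - \<alpha>) * (1 - Sim e' ?x) \<le> \<alpha> * Sim e ?q + (1 - \<alpha>) * (1 - Sim e ?x)"
    using e by (auto simp: div_score_one)
  obtain T1e je where he: "T1e \<subseteq> {1..2*l}" "card T1e = l - 1" "je \<in> {2*l+1..4*l}" "e = indvec (4*l) (insert je T1e)"
    using eD(1) unfolding demo_iff by blast
  have fin1: "finite T1" "finite T1e" using v1(1) he(1) finite_subset by blast+
  have "T1 \<noteq> {}" using v1(2) l3 by auto
  then obtain t' where t': "t' \<in> T1" by blast
  have t'T: "t' \<in> T" using t' v1(4) by auto
  define jc where "jc = (if j = 2*l+1 then 2*l+2 else 2*l+1)"
  have jc: "jc \<in> {2*l+1..4*l}" "jc \<noteq> j" unfolding jc_def using l3 by auto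
  let ?c = "indvec (4*l) (insert jc (T - {t'}))"
  have cD: "?c \<in> demo_set l" and cS: "Sim ?c ?q = (real l - 1) / real l"
    and cv: "T - {t'} \<subseteq> {1..2*l}" "card (T - {t'}) = l - 1"
    using maxer[OF t'T jc(1)] by auto
  have cx: "?c \<noteq> ?x"
  proof (rule indvec_neq)
    show "jc \<in> insert jc (T - {t'})" by simp
    show "jc \<notin> insert j T1" using jc v1(1) by auto
    show "jc \<in> {1..4*l}" using jc by auto
  qed
  have Acx: "insert jc (T - {t'}) \<inter> insert j T1 = T1 - {t'}" using jc v1 TS by auto
  have cardA: "card (T1 - {t'}) = l - 2" using t' fin1(1) v1(2) by simp
  have cxS: "Sim ?c ?x = real (l - 2) / real l"
    using Sim_ind[OF dv_sub[OF cv(1) jc(1)] dv_sub[OF v1(1) v1(3)] dv_card[OF cv jc(1) l1] dv_card[OF v1(1-3) l1]]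
    unfolding Acx cardA .
  define k where "k = card (T1e \<inter> T)"
  define m where "m = card (T1e \<inter> T1)"
  define \<delta> where "\<delta> = (if je = j then 1 else (0::nat))"
  have eS: "Sim e ?q = real k / real l" unfolding k_def he(4) using sim_dv[OF he(1-3)] .
  have exS: "Sim e ?x = real (m + \<delta>) / real l"
  proof -
    have "Sim e ?x = real (card (insert je T1e \<inter> insert j T1)) / real l"
      unfolding he(4) by (rule Sim_ind[OF dv_sub[OF he(1) he(3)] dv_sub[OF v1(1) v1(3)] dv_card[OF he(1-3) l1] dv_card[OF v1(1-3) l1]])
    also have "card (insert je T1e \<inter> insert j T1) = m + \<delta>"
      unfolding m_def \<delta>_def using dv_int_dv[OF he(1) v1(1) he(3) v1(3)] by simp
    finally show ?thesis .
  qed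
  have kl: "k \<le> l - 1" unfolding k_def using card_T1T[OF he(1,2)] .
  have mk: "m \<le> k" unfolding m_def k_def using fin1(2) v1(4) by (intro card_mono) auto
  have km: "k \<le> m + 1"
  proof -
    have fX: "finite (T1e \<inter> T)" using fin1(2) by simp
    have ii: "(T1e \<inter> T) \<inter> T1 = T1e \<inter> T1" using v1(4) by auto
    have "card (T1e \<inter> T) + card T1 = card ((T1e \<inter> T) \<union> T1) + card (T1e \<inter> T1)"
      using card_Un_Int[OF fX fin1(1)] unfolding ii .
    moreover have "card ((T1e \<inter> T) \<union> T1) \<le> l" using v1(4) TC finT by (metis Int_lower2 Un_least card_mono)
    ultimately show ?thesis unfolding k_def m_def using v1(2) l3 by linarith
  qed
  have d1: "\<delta> \<le> 1" unfolding \<delta>_def by simp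
  have H0: "\<alpha> * (real (l - 1) / real l) + (1 - \<alpha>) * (1 - real (l - 2) / real l)
        \<le> \<alpha> * (real k / real l) + (1 - \<alpha>) * (1 - real (m + \<delta>) / real l)"
  proof -
    have "\<alpha> * Sim ?c ?q + (1 - \<alpha>) * (1 - Sim ?c ?x) \<le> \<alpha> * Sim e ?q + (1 - \<alpha>) * (1 - Sim e ?x)"
      using le cD cx by blast
    then show ?thesis unfolding cS cxS eS exS using l3 by simp
  qed
  have res: "k = l - 1 \<and> m = l - 2 \<and> \<delta> = 0" by (rule score_ineq[OF l3 a1 a2 kl km mk d1 H0])
  have sub: "T1e \<subseteq> T" using sub_of_card[OF fin1(2) he(2)] res unfolding k_def by simp
  have "card (insert j T1 \<inter> insert je T1e) = l - 2"
    using dv_int_dv[OF v1(1) he(1) v1(3) he(3)] res unfolding m_def \<delta>_def by (auto simp: Int_commute split: if_splits)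
  then show ?thesis using he sub by blast
qed

lemma div_support:
  assumes a1: "1 - 1 / real l \<le> \<alpha>" and a2: "\<alpha> < 1"
    and xs: "xs \<in> set_pmf (topkdiv_sel \<alpha> (demo_set l) 2 (indvec (4*l) T))"
  shows "PL l xs (indvec (4*l) T) = 1/12"
proof -
  let ?D = "demo_set l" and ?q = "indvec (4*l) T"
  define S where "S ys = {e \<in> ?D - set ys. \<forall>e'\<in>?D - set ys. div_score \<alpha> ?q (set ys) e' \<le> div_score \<alpha> ?q (set ys) e}" for ys
  have apos: "\<alpha> > 0"
  proof -
    have "1 / real l \<le> 1 / 3" using l3 by (simp add: field_simps)
    then show ?thesis using a1 by linarith
  qed
  have finS: "finite (S ys)" for ys
    unfolding S_def by (rule finite_subset[OF _ demo_finite[of l]]) auto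
  have neS: "S ys \<noteq> {}" if "?D - set ys \<noteq> {}" for ys
    unfolding S_def by (rule argset_ne) (use that demo_finite[of l] in auto)
  have step: "topkdiv_sel \<alpha> ?D (Suc k) ?q = bind_pmf (topkdiv_sel \<alpha> ?D k ?q) (\<lambda>ys. map_pmf (\<lambda>e. ys @ [e]) (pmf_of_set (S ys)))" for k
    unfolding S_def by (rule topkdiv_sel.simps(2))
  have two: "(2::nat) = Suc (Suc 0)" by simp
  have "xs \<in> set_pmf (bind_pmf (topkdiv_sel \<alpha> ?D (Suc 0) ?q) (\<lambda>ys. map_pmf (\<lambda>e. ys @ [e]) (pmf_of_set (S ys))))"
    using xs unfolding two step[of "Suc 0"] .
  then obtain ys e where ys: "ys \<in> set_pmf (topkdiv_sel \<alpha> ?D (Suc 0) ?q)" and e: "e \<in> set_pmf (pmf_of_set (S ys))"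
    and xse: "xs = ys @ [e]"
    unfolding set_bind_pmf set_map_pmf by blast
  have "ys \<in> set_pmf (bind_pmf (return_pmf []) (\<lambda>ys. map_pmf (\<lambda>e. ys @ [e]) (pmf_of_set (S ys))))"
    using ys unfolding step[of 0] topkdiv_sel.simps(1) .
  then obtain x1 where x1: "x1 \<in> set_pmf (pmf_of_set (S []))" and ysx: "ys = [x1]"
    unfolding set_bind_pmf set_map_pmf set_return_pmf by auto
  obtain t where t: "t \<in> T" using T_ne by blast
  have ks: "(1::nat) \<in> {1..3}" "(2::nat) \<in> {1..3}" by auto
  have w1: "indvec (4*l) (insert (2*l+1) (T - {t})) \<in> ?D" using wvec(1)[OF t ks(1)] .
  have w2: "indvec (4*l) (insert (2*l+2) (T - {t})) \<in> ?D" using wvec(1)[OF t ks(2)] .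
  have n12: "indvec (4*l) (insert (2*l+1) (T - {t})) \<noteq> indvec (4*l) (insert (2*l+2) (T - {t}))"
    by (rule wneq; simp)
  have "?D - set [] \<noteq> {}" using w1 by auto
  then have x1S: "x1 \<in> S []" using x1 set_pmf_of_set[OF neS finS] by blast
  obtain T1 j where h1: "x1 = indvec (4*l) (insert j T1)" "T1 \<subseteq> {1..2*l}" "card T1 = l - 1"
      "j \<in> {2*l+1..4*l}" "T1 \<subseteq> T"
    using S0_elem[OF apos x1S[unfolded S_def]] by blast
  have "?D - set [x1] \<noteq> {}" using w1 w2 n12 by auto
  then have eS: "e \<in> S [x1]" using e ysx set_pmf_of_set[OF neS finS] by blast
  obtain T1' j' where h2: "e = indvec (4*l) (insert j' T1')" "T1' \<subseteq> {1..2*l}" "card T1' = l - 1"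
      "j' \<in> {2*l+1..4*l}" "T1' \<subseteq> T" "card (insert j T1 \<inter> insert j' T1') = l - 2"
    using S1_elem[OF a1 a2 h1(2-5)] eS[unfolded S_def h1(1)] h1(1) by blast
  have "xs = [indvec (4*l) (insert j T1), indvec (4*l) (insert j' T1')]" using xse ysx h1(1) h2(1) by simp
  then show ?thesis using pair_val(1)[OF h1(2-5) h2(2-5) h2(6)] by simp
qed

end

theorem theorem2:
  fixes l :: nat and \<alpha> :: real
  assumes "l \<ge> 3" and "1 - 1 / real l \<le> \<alpha>" and "\<alpha> < 1"
  shows "expected_loss (4 * l) (query_dist l) (topk_sel (demo_set l) 2)
       > expected_loss (4 * l) (query_dist l) (topkdiv_sel \<alpha> (demo_set l) 2)"
proof -
  note l3 = assms(1) and a1 = assms(2) and a2 = assms(3)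
  define Qs where "Qs = {T. T \<subseteq> {1..2*l} \<and> card T = l}"
  have finQ: "finite Qs" unfolding Qs_def by (rule finite_subset[of _ "Pow {1..2*l}"]) auto
  have inQ: "{1..l} \<in> Qs" unfolding Qs_def by auto
  have neQ: "Qs \<noteq> {}" using inQ by blast
  have QsT: "T \<subseteq> {1..2*l}" "card T = l" if "T \<in> Qs" for T using that unfolding Qs_def by auto
  have "expected_loss (4 * l) (query_dist l) (topkdiv_sel \<alpha> (demo_set l) 2) = 1/12"
    unfolding expected_loss_def query_dist_def Qs_def[symmetric] integral_map_pmf
  proof (rule expect_const)
    fix T assume "T \<in> set_pmf (pmf_of_set Qs)"
    then have T: "T \<in> Qs" using set_pmf_of_set[OF neQ finQ] by blast
    show "measure_pmf.expectation (topkdiv_sel \<alpha> (demo_set l) 2 (indvec (4 * l) T))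
        (\<lambda>xs. integral\<^sup>L (theta_measure (4 * l)) (\<lambda>\<theta>. pred_loss (4 * l) xs (vec (4 * l) \<theta>) (indvec (4 * l) T))) = 1/12"
      using div_support[OF l3 QsT[OF T] a1 a2] unfolding PL_def by (intro expect_const) auto
  qed
  moreover have "expected_loss (4 * l) (query_dist l) (topk_sel (demo_set l) 2) > 1/12"
  proof -
    have "expected_loss (4 * l) (query_dist l) (topk_sel (demo_set l) 2)
      = (\<Sum>T\<in>Qs. measure_pmf.expectation (pmf_of_set (TKset l (indvec (4*l) T))) (\<lambda>xs. PL l xs (indvec (4*l) T))) / real (card Qs)"
      unfolding expected_loss_def query_dist_def Qs_def[symmetric] integral_map_pmf
        integral_pmf_of_set[OF neQ finQ] topk_sel_def TKset_def PL_def ..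
    also have "\<dots> > 1/12"
    proof (rule avg_gt[OF finQ inQ])
      fix T assume "T \<in> Qs"
      then show "1/12 \<le> measure_pmf.expectation (pmf_of_set (TKset l (indvec (4*l) T))) (\<lambda>xs. PL l xs (indvec (4*l) T))"
        using ET_gt[OF l3 QsT] by (meson less_imp_le)
    next
      show "1/12 < measure_pmf.expectation (pmf_of_set (TKset l (indvec (4*l) {1..l}))) (\<lambda>xs. PL l xs (indvec (4*l) {1..l}))"
        using ET_gt[OF l3 QsT[OF inQ]] .
    qed
    finally show ?thesis .
  qed
  ultimately show ?thesis by simp
qed

end
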